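(* Let $\mathcal{M}=(E,\mathcal{I},A,w)$ be a weighted uncertainty matroid with $A_e=\{L_e,U_e\}$ for all $e\in E$, and let $M[D,K]$ be a compatible minor of $\mathcal{M}$ that contains no element $e$ with $w_e=U_e$ or $w_e=L_e$. Then $K$ is a minimum-weight basis of $\mathcal{M}$ that can be verified with a minimum-cost certificate. Moreover, if in addition the query costs are uniform and there are reals $L<U$ with $A_e=\{L,U\}$ for all $e\in E$, then every minimum-weight basis $B$ of $\mathcal{M}$ has the same verification cost.
   Context: A weighted uncertainty matroid $\mathcal{M}=(E,\mathcal{I},A,w)$ consists of a matroid $M=(E,\mathcal{I})$ on a finite set $E$, for each $e\in E$ a non-empty finite union $A_e$ of bounded real intervals (each open or closed, single points allowed), a weight $w_e\in A_e$, and a query cost $c_e\ge0$. $L_e=\inf A_e$, $U_e=\sup A_e$. A minimum-weight basis (MWB) is a basis minimizing total weight. A weight assignment is $w^*$ with $w^*_e\in A_e$, consistent with $Q$ if $w^*_e=w_e$ on $Q$. $Q$ verifies an MWB $B$ if for every weight assignment consistent with $Q$, $B$ is an MWB with respect to it; a certificate for $\mathcal{M}$ is a set verifying some MWB; $c^*$ is the minimum cost $\sum_{e\in Q}c_e$ of a certificate for $\mathcal{M}$ (a minimum-cost certificate). The verification cost of an MWB $B$ is the minimum cost of a set verifying $B$. For $D,K\subseteq E$, $M[D,K]$ is the matroid obtained from $M$ by deleting $D$ and contracting $K$, ground set $E\setminus(D\cup K)$. $M[D,K]$ is a compatible minor if there is a set $Q$ of cost $c^*$ verifying an MWB $B$ of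 $\mathcal{M}$ with $K\subseteq B$ and $D\cap B=\emptyset$. *)

theory Defs
  imports "HOL-Analysis.Analysis"
begin

definition matroid :: "'a set \<Rightarrow> ('a set \<Rightarrow> bool) \<Rightarrow> bool" where
  "matroid E indep \<longleftrightarrow>
     finite E \<and>
     indep {} \<and>
     (\<forall>X. indep X \<longrightarrow> X \<subseteq> E) \<and>
     (\<forall>X Y. indep Y \<and> X \<subseteq> Y \<longrightarrow> indep X) \<and>
     (\<forall>X Y. indep X \<and> indep Y \<and> card X < card Y \<longrightarrow>
        (\<exists>e\<in>Y - X. indep (insert e X)))"

definition basis :: "'a set \<Rightarrow> ('a set \<Rightarrow> bool) \<Rightarrow> 'a set \<Rightarrow> bool" where
  "basis E indep B \<longleftrightarrow> B \<subseteq> E \<and> indep B \<and> (\<forall>X. indep X \<and> B \<subseteq> X \<longrightarrow> X = B)"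

definition bounded_interval :: "real set \<Rightarrow> bool" where
  "bounded_interval S \<longleftrightarrow> S \<noteq> {} \<and> is_interval S \<and> bounded S"

definition uncertainty_area :: "real set \<Rightarrow> bool" where
  "uncertainty_area S \<longleftrightarrow>
     (\<exists>F. finite F \<and> F \<noteq> {} \<and> (\<forall>I\<in>F. bounded_interval I) \<and> S = \<Union>F)"

definition lower :: "('a \<Rightarrow> real set) \<Rightarrow> 'a \<Rightarrow> real" where
  "lower A e = Inf (A e)"

definition upper :: "('a \<Rightarrow> real set) \<Rightarrow> 'a \<Rightarrow> real" where
  "upper A e = Sup (A e)"

definition wu_matroid ::
  "'a set \<Rightarrow> ('a set \<Rightarrow> bool) \<Rightarrow> ('a \<Rightarrow> real set) \<Rightarrow> ('a \<Rightarrow> real) \<Rightarrow> ('a \<Rightarrow> real) \<Rightarrow> bool" where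
  "wu_matroid E indep A w c \<longleftrightarrow>
     matroid E indep \<and>
     (\<forall>e\<in>E. uncertainty_area (A e) \<and> w e \<in> A e \<and> c e \<ge> 0)"

definition is_MWB :: "'a set \<Rightarrow> ('a set \<Rightarrow> bool) \<Rightarrow> ('a \<Rightarrow> real) \<Rightarrow> 'a set \<Rightarrow> bool" where
  "is_MWB E indep w' B \<longleftrightarrow>
     basis E indep B \<and> (\<forall>B'. basis E indep B' \<longrightarrow> sum w' B \<le> sum w' B')"

definition weight_assignment :: "'a set \<Rightarrow> ('a \<Rightarrow> real set) \<Rightarrow> ('a \<Rightarrow> real) \<Rightarrow> bool" where
  "weight_assignment E A w' \<longleftrightarrow> (\<forall>e\<in>E. w' e \<in> A e)"

definition consistent :: "'a set \<Rightarrow> ('a \<Rightarrow> real set) \<Rightarrow> ('a \<Rightarrow> real) \<Rightarrow> 'a set \<Rightarrow> ('a \<Rightarrow> real) \<Rightarrow> bool" where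
  "consistent E A w Q w' \<longleftrightarrow> weight_assignment E A w' \<and> (\<forall>e\<in>Q. w' e = w e)"

definition verifies ::
  "'a set \<Rightarrow> ('a set \<Rightarrow> bool) \<Rightarrow> ('a \<Rightarrow> real set) \<Rightarrow> ('a \<Rightarrow> real) \<Rightarrow> 'a set \<Rightarrow> 'a set \<Rightarrow> bool" where
  "verifies E indep A w Q B \<longleftrightarrow>
     Q \<subseteq> E \<and> (\<forall>w'. consistent E A w Q w' \<longrightarrow> is_MWB E indep w' B)"

definition certificate ::
  "'a set \<Rightarrow> ('a set \<Rightarrow> bool) \<Rightarrow> ('a \<Rightarrow> real set) \<Rightarrow> ('a \<Rightarrow> real) \<Rightarrow> 'a set \<Rightarrow> bool" where
  "certificate E indep A w Q \<longleftrightarrow> (\<exists>B. is_MWB E indep w B \<and> verifies E indep A w Q B)"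

definition opt_cost ::
  "'a set \<Rightarrow> ('a set \<Rightarrow> bool) \<Rightarrow> ('a \<Rightarrow> real set) \<Rightarrow> ('a \<Rightarrow> real) \<Rightarrow> ('a \<Rightarrow> real) \<Rightarrow> real" where
  "opt_cost E indep A w c = Min (sum c ` {Q. certificate E indep A w Q})"

definition verification_cost ::
  "'a set \<Rightarrow> ('a set \<Rightarrow> bool) \<Rightarrow> ('a \<Rightarrow> real set) \<Rightarrow> ('a \<Rightarrow> real) \<Rightarrow> ('a \<Rightarrow> real) \<Rightarrow> 'a set \<Rightarrow> real" where
  "verification_cost E indep A w c B = Min (sum c ` {Q. verifies E indep A w Q B})"

text \<open>Ground set of the minor \<open>M[D,K]\<close> (delete \<open>D\<close>, contract \<open>K\<close>).\<close>
definition minor_ground :: "'a set \<Rightarrow> 'a set \<Rightarrow> 'a set \<Rightarrow> 'a set" where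
  "minor_ground E D K = E - (D \<union> K)"

definition compatible_minor ::
  "'a set \<Rightarrow> ('a set \<Rightarrow> bool) \<Rightarrow> ('a \<Rightarrow> real set) \<Rightarrow> ('a \<Rightarrow> real) \<Rightarrow> ('a \<Rightarrow> real)
     \<Rightarrow> 'a set \<Rightarrow> 'a set \<Rightarrow> bool" where
  "compatible_minor E indep A w c D K \<longleftrightarrow>
     D \<subseteq> E \<and> K \<subseteq> E \<and> D \<inter> K = {} \<and>
     (\<exists>Q B. verifies E indep A w Q B \<and> is_MWB E indep w B \<and>
            sum c Q = opt_cost E indep A w c \<and> K \<subseteq> B \<and> D \<inter> B = {})"

end

theory Submission
  imports Defs
begin

lemma matroid_indep_subset: "matroid E indep \<Longrightarrow> indep X \<Longrightarrow> X \<subseteq> E"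
  by (simp add: matroid_def)
lemma matroid_finite: "matroid E indep \<Longrightarrow> finite E" by (simp add: matroid_def)
lemma matroid_indep_finite: "matroid E indep \<Longrightarrow> indep X \<Longrightarrow> finite X"
  using matroid_indep_subset matroid_finite finite_subset by metis
lemma matroid_down: "matroid E indep \<Longrightarrow> indep Y \<Longrightarrow> X \<subseteq> Y \<Longrightarrow> indep X"
  unfolding matroid_def by blast
lemma matroid_aug: "matroid E indep \<Longrightarrow> indep X \<Longrightarrow> indep Y \<Longrightarrow> card X < card Y
   \<Longrightarrow> \<exists>e\<in>Y - X. indep (insert e X)"
  by (simp add: matroid_def)

lemma basis_card:
  assumes "matroid E indep" "basis E indep B1" "basis E indep B2"
  shows "card B1 = card B2"
proof -
  have "\<not> card B1 < card B2" if h1: "basis E indep B1" and h2: "basis E indep B2" for B1 B2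
  proof
    assume "card B1 < card B2"
    then obtain e where "e \<in> B2 - B1" "indep (insert e B1)"
      using matroid_aug[OF assms(1), of B1 B2] h1 h2 unfolding basis_def by blast
    then show False using h1 unfolding basis_def by blast
  qed
  then show ?thesis using assms by (meson linorder_neqE_nat)
qed

lemma extend_basis:
  assumes M: "matroid E indep" and J: "indep J"
  shows "\<exists>B. basis E indep B \<and> J \<subseteq> B"
proof -
  let ?C = "{Y. indep Y \<and> J \<subseteq> Y}"
  have "?C \<subseteq> Pow E" using matroid_indep_subset[OF M] by auto
  then have fin: "finite ?C" using matroid_finite[OF M] by (meson finite_Pow_iff finite_subset)
  have ne: "J \<in> ?C" using J by simp
  have "Max (card ` ?C) \<in> card ` ?C" using fin ne by (intro Max_in) auto
  then obtain B where B: "B \<in> ?C" "card B = Max (card ` ?C)" by auto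
  have mx: "card Y \<le> card B" if "Y \<in> ?C" for Y using B(2) fin that by simp
  have "basis E indep B"
    unfolding basis_def
  proof (intro conjI allI impI)
    show "B \<subseteq> E" using B(1) matroid_indep_subset[OF M] by auto
    show "indep B" using B(1) by auto
    fix X assume X: "indep X \<and> B \<subseteq> X"
    then have "X \<in> ?C" using B(1) by auto
    then have "card X \<le> card B" by (rule mx)
    moreover have "finite X" using X matroid_indep_finite[OF M] by blast
    ultimately show "X = B" using X by (metis card_seteq)
  qed
  then show ?thesis using B(1) by auto
qed

lemma closure_card:
  assumes "matroid E indep" "indep S" "indep I"
    "I \<subseteq> {e\<in>E. e\<in>S \<or> \<not> indep (insert e S)}"
  shows "card I \<le> card S"
proof (rule ccontr)
  assume "\<not> ?thesis" then have "card S < card I" by simp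
  then obtain e where "e \<in> I - S" "indep (insert e S)"
    using matroid_aug[OF assms(1) assms(2) assms(3)] by blast
  then show False using assms(4) by blast
qed

lemma sum_LU:
  fixes v :: "'a \<Rightarrow> real"
  assumes "finite B" "\<forall>e\<in>B. v e = L \<or> v e = U"
  shows "sum v B = U * card B - (U - L) * card {e\<in>B. v e = L}"
proof -
  have "sum v B = sum (\<lambda>e. U - (U - L) * (if v e = L then 1 else 0)) B"
    using assms(2) by (intro sum.cong) auto
  also have "\<dots> = U * card B - (U-L) * sum (\<lambda>e. if v e = L then 1 else 0::real) B"
    by (simp add: sum_subtractf sum_distrib_left)
  also have "sum (\<lambda>e. if v e = L then 1 else 0::real) B = real (card {e\<in>B. v e = L})"
    using assms(1) by (simp add: sum.If_cases Int_def conj_commute)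
  finally show ?thesis by simp
qed

lemma verifies_suff:
  assumes M: "matroid E indep" and bB: "basis E indep B" and QE: "Q \<subseteq> E"
    and AU: "\<forall>e\<in>E. A e = {L,U}" and LU: "L < U"
    and MW: "is_MWB E indep (\<lambda>e. if e\<in>Q then w e else if e\<in>B then U else L) B"
  shows "verifies E indep A w Q B"
  unfolding verifies_def
proof (intro conjI allI impI)
  show "Q \<subseteq> E" by fact
  fix w' assume cw: "consistent E A w Q w'"
  let ?v = "\<lambda>e. if e\<in>Q then w e else if e\<in>B then U else L"
  show "is_MWB E indep w' B"
    unfolding is_MWB_def
  proof (intro conjI allI impI)
    show "basis E indep B" by fact
    fix B'' assume bB'': "basis E indep B''"
    have fB: "finite B" "finite B''" using bB bB'' matroid_indep_finite[OF M]
      unfolding basis_def by auto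
    have BE: "B \<subseteq> E" "B'' \<subseteq> E" using bB bB'' unfolding basis_def by auto
    have h: "sum ?v B \<le> sum ?v B''" using MW bB'' unfolding is_MWB_def by blast
    have w'A: "\<forall>e\<in>E. w' e = L \<or> w' e = U" and w'Q: "\<forall>e\<in>Q. w' e = w e"
      using cw AU unfolding consistent_def weight_assignment_def by auto
    have s1: "sum w' (B - B'') \<le> sum ?v (B - B'')"
    proof (rule sum_mono)
      fix e assume "e \<in> B - B''"
      then show "w' e \<le> ?v e" using w'A w'Q BE LU by (cases "e \<in> Q") force+
    qed
    have s2: "sum ?v (B'' - B) \<le> sum w' (B'' - B)"
    proof (rule sum_mono)
      fix e assume "e \<in> B'' - B"
      then show "?v e \<le> w' e" using w'A w'Q BE LU by (cases "e \<in> Q") force+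
    qed
    have e1: "sum g B = sum g (B \<inter> B'') + sum g (B - B'')" for g :: "'a \<Rightarrow> real"
      using fB by (simp add: sum.Int_Diff)
    have e2: "sum g B'' = sum g (B \<inter> B'') + sum g (B'' - B)" for g :: "'a \<Rightarrow> real"
      using fB sum.Int_Diff[of B'' g B] by (simp add: Int_commute)
    show "sum w' B \<le> sum w' B''"
      using e1[of w'] e2[of w'] e1[of ?v] e2[of ?v] h s1 s2 by linarith
  qed
qed

lemma verifies_nec:
  assumes V: "verifies E indep A w Q B"
    and AU: "\<forall>e\<in>E. A e = {L,U}" and wA: "\<forall>e\<in>E. w e \<in> A e"
  shows "is_MWB E indep (\<lambda>e. if e\<in>Q then w e else if e\<in>B then U else L) B"
proof -
  have "consistent E A w Q (\<lambda>e. if e\<in>Q then w e else if e\<in>B then U else L)"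
    unfolding consistent_def weight_assignment_def using AU wA by auto
  then show ?thesis using V unfolding verifies_def by blast
qed


lemma key:
  assumes M: "matroid E indep" and AU: "\<forall>e\<in>E. A e = {L,U}" and LU: "L < U"
    and wA: "\<forall>e\<in>E. w e \<in> A e"
    and MB: "is_MWB E indep w B" and MB': "is_MWB E indep w B'"
    and V': "verifies E indep A w Q' B'"
  shows "\<exists>Q. verifies E indep A w Q B \<and> card Q \<le> card Q'"
proof -
  have wLU: "\<forall>e\<in>E. w e = L \<or> w e = U" using AU wA by auto
  have bB: "basis E indep B" and bB': "basis E indep B'" using MB MB' by (auto simp: is_MWB_def)
  have BE: "B \<subseteq> E" "B' \<subseteq> E" using bB bB' by (auto simp: basis_def)
  have iB: "indep B" "indep B'" using bB bB' by (auto simp: basis_def)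
  have finE: "finite E" using M by (simp add: matroid_def)
  have finB: "finite B" "finite B'" using BE finE finite_subset by auto
  have Q'E: "Q' \<subseteq> E" using V' by (simp add: verifies_def)
  have finQ': "finite Q'" using Q'E finE finite_subset by auto
  have cBB': "card B = card B'" using basis_card[OF M bB bB'] .
  define v' where "v' = (\<lambda>e. if e\<in>Q' then w e else if e\<in>B' then U else L)"
  have v'MWB: "is_MWB E indep v' B'" unfolding v'_def by (rule verifies_nec[OF V' AU wA])
  have v'LU: "\<forall>e\<in>E. v' e = L \<or> v' e = U" using wLU unfolding v'_def by auto
  define S' where "S' = {e\<in>B'. e\<in>Q' \<and> w e = L}"
  have S'B': "S' \<subseteq> B'" unfolding S'_def by auto
  have S'indep: "indep S'" using matroid_down[OF M iB(2) S'B'] .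
  have finS': "finite S'" using S'B' finB finite_subset by auto
  define F where "F = {e\<in>E. e\<in>S' \<or> \<not> indep (insert e S')}"
  have cnt: "card {e\<in>B''. v' e = L} \<le> card S'" if bB'': "basis E indep B''" for B''
  proof -
    have B''E: "B'' \<subseteq> E" using bB'' by (auto simp: basis_def)
    have finB'': "finite B''" using B''E finE finite_subset by auto
    have "sum v' B' \<le> sum v' B''" using v'MWB bB'' unfolding is_MWB_def by blast
    moreover have "card B'' = card B'" using basis_card[OF M bB'' bB'] .
    moreover have "{e\<in>B'. v' e = L} = S'" unfolding S'_def v'_def using LU by auto
    moreover have "sum v' B' = U * card B' - (U - L) * card {e\<in>B'. v' e = L}"
      using sum_LU[OF finB(2), of v' L U] v'LU BE by blast
    moreover have "sum v' B'' = U * card B'' - (U - L) * card {e\<in>B''. v' e = L}"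
      using sum_LU[OF finB'', of v' L U] v'LU B''E by blast
    ultimately have "(U - L) * card {e\<in>B''. v' e = L} \<le> (U - L) * card S'" by simp
    then show ?thesis using LU by simp
  qed
  have inF: "e \<in> F" if eE: "e\<in>E" and ve: "v' e = L" for e
  proof (rule ccontr)
    assume "e \<notin> F"
    then have eS: "e \<notin> S'" and ie: "indep (insert e S')" using eE by (auto simp: F_def)
    obtain B'' where bB'': "basis E indep B''" and sub: "insert e S' \<subseteq> B''"
      using extend_basis[OF M ie] by blast
    have finB'': "finite B''" using bB'' finE finite_subset by (auto simp: basis_def)
    have "insert e S' \<subseteq> {x\<in>B''. v' x = L}" using sub ve unfolding S'_def v'_def by auto
    then have "card (insert e S') \<le> card {x\<in>B''. v' x = L}"
      using finB'' by (intro card_mono) auto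
    moreover have "card (insert e S') = card S' + 1" using eS finS' by simp
    ultimately show False using cnt[OF bB''] by simp
  qed
  have B'F: "B' \<inter> F = S'"
  proof
    show "S' \<subseteq> B' \<inter> F" using S'B' BE unfolding F_def by auto
    show "B' \<inter> F \<subseteq> S'"
    proof
      fix e assume e: "e \<in> B' \<inter> F"
      show "e \<in> S'"
      proof (rule ccontr)
        assume "e \<notin> S'"
        then have "\<not> indep (insert e S')" using e unfolding F_def by auto
        moreover have "insert e S' \<subseteq> B'" using e S'B' by auto
        ultimately show False using matroid_down[OF M iB(2)] by blast
      qed
    qed
  qed
  define X where "X = {e\<in>E. w e = L}"
  have XB'F: "X - B' \<subseteq> F"
  proof
    fix e assume "e \<in> X - B'"
    then have "e \<in> E" "v' e = L" unfolding X_def v'_def by auto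
    then show "e \<in> F" by (rule inF)
  qed
  have EB'F: "E - B' - F \<subseteq> Q'"
  proof
    fix e assume e: "e \<in> E - B' - F"
    show "e \<in> Q'"
    proof (rule ccontr)
      assume "e \<notin> Q'"
      then have "v' e = L" using e unfolding v'_def by auto
      then show False using inF e by blast
    qed
  qed
  have cardBX: "card (B \<inter> X) = card (B' \<inter> X)"
  proof -
    have "sum w B = sum w B'" using MB MB' bB bB' unfolding is_MWB_def by (meson order_antisym)
    moreover have "{e\<in>B. w e = L} = B \<inter> X" "{e\<in>B'. w e = L} = B' \<inter> X"
      using BE unfolding X_def by auto
    moreover have "sum w B = U * card B - (U - L) * card {e\<in>B. w e = L}"
      using sum_LU[OF finB(1), of w L U] wLU BE by blast
    moreover have "sum w B' = U * card B' - (U - L) * card {e\<in>B'. w e = L}"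
      using sum_LU[OF finB(2), of w L U] wLU BE by blast
    ultimately have "(U - L) * card (B \<inter> X) = (U - L) * card (B' \<inter> X)" using cBB' by simp
    then show ?thesis using LU by simp
  qed
  have finX: "finite X" unfolding X_def using finE by simp
  have finF: "finite F" unfolding F_def using finE by simp
  have B'X: "B' \<inter> X = S' \<union> (X - F)"
  proof
    show "B' \<inter> X \<subseteq> S' \<union> (X - F)" using B'F by blast
    show "S' \<union> (X - F) \<subseteq> B' \<inter> X" using S'B' XB'F BE unfolding S'_def X_def by auto
  qed
  have cB'X: "card (B' \<inter> X) = card S' + card (X - F)"
  proof -
    have "S' \<inter> (X - F) = {}" using B'F by blast
    then show ?thesis using B'X finS' finX by (simp add: card_Un_disjoint)
  qed
  have c1: "card (B \<inter> X \<inter> F) \<le> card S'"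
    by (rule closure_card[OF M S'indep]) (auto intro: matroid_down[OF M iB(1)] simp: F_def)
  have c2: "card (B \<inter> X) = card (B \<inter> X \<inter> F) + card (B \<inter> X - F)"
  proof -
    have "B \<inter> X = (B \<inter> X \<inter> F) \<union> (B \<inter> X - F)" by blast
    moreover have "(B \<inter> X \<inter> F) \<inter> (B \<inter> X - F) = {}" by blast
    ultimately show ?thesis using finB(1) by (metis card_Un_disjoint finite_Diff finite_Int)
  qed
  have c3: "card (B \<inter> X - F) \<le> card (X - F)" using finX by (intro card_mono) auto
  have c4: "card (B \<inter> X - F) = card (X - F)" using cardBX cB'X c1 c2 c3 by linarith
  have XFB: "X - F \<subseteq> B"
  proof -
    have "B \<inter> X - F = X - F" using c4 finX by (intro card_subset_eq) auto
    then show ?thesis by blast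
  qed
  define S where "S = B \<inter> X \<inter> F"
  have cS: "card S = card S'" unfolding S_def using cardBX cB'X c2 c4 by linarith
  define Q where "Q = S \<union> (E - B - F)"
  have QE: "Q \<subseteq> E" unfolding Q_def S_def using BE by auto
  define v where "v = (\<lambda>e. if e\<in>Q then w e else if e\<in>B then U else L)"
  have vLU: "\<forall>e\<in>E. v e = L \<or> v e = U" using wLU unfolding v_def by auto
  have MWv: "is_MWB E indep v B"
    unfolding is_MWB_def
  proof (intro conjI allI impI)
    show "basis E indep B" by fact
    fix B'' assume bB'': "basis E indep B''"
    have B''E: "B'' \<subseteq> E" using bB'' by (auto simp: basis_def)
    have finB'': "finite B''" using B''E finE finite_subset by auto
    have iB'': "indep B''" using bB'' by (auto simp: basis_def)
    have eqS: "{e\<in>B. v e = L} = S"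
    proof
      show "{e\<in>B. v e = L} \<subseteq> S" using LU unfolding v_def Q_def by auto
      show "S \<subseteq> {e\<in>B. v e = L}" unfolding v_def Q_def S_def X_def by auto
    qed
    have subF: "{e\<in>B''. v e = L} \<subseteq> F"
    proof
      fix e assume e: "e \<in> {e\<in>B''. v e = L}"
      then have eE: "e \<in> E" using B''E by auto
      show "e \<in> F"
      proof (cases "e \<in> Q")
        case True
        then have "w e = L" using e unfolding v_def by auto
        then show ?thesis using True XFB eE unfolding Q_def S_def X_def by auto
      next
        case False
        then show ?thesis using e eE LU unfolding v_def Q_def by (auto split: if_splits)
      qed
    qed
    have "card {e\<in>B''. v e = L} \<le> card S'"
      by (rule closure_card[OF M S'indep]) (use subF iB'' matroid_down[OF M iB''] in \<open>auto simp: F_def\<close>)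
    moreover have "card B'' = card B" using basis_card[OF M bB'' bB] .
    moreover have "sum v B = U * card B - (U - L) * card {e\<in>B. v e = L}"
      using sum_LU[OF finB(1), of v L U] vLU BE by blast
    moreover have "sum v B'' = U * card B'' - (U - L) * card {e\<in>B''. v e = L}"
      using sum_LU[OF finB'', of v L U] vLU B''E by blast
    ultimately show "sum v B \<le> sum v B''" using eqS cS LU
      by (simp add: mult_left_mono)
  qed
  have VQ: "verifies E indep A w Q B"
    by (rule verifies_suff[OF M bB QE AU LU]) (use MWv in \<open>simp add: v_def\<close>)
  have finS: "finite S" unfolding S_def using finB by simp
  have cQ: "card Q = card S + card (E - B - F)"
    unfolding Q_def using finS finE by (intro card_Un_disjoint) (auto simp: S_def)
  have cQ': "card S' + card (E - B' - F) \<le> card Q'"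
  proof -
    have "card (S' \<union> (E - B' - F)) \<le> card Q'"
      using S'B' EB'F finQ' unfolding S'_def by (intro card_mono) auto
    moreover have "card (S' \<union> (E - B' - F)) = card S' + card (E - B' - F)"
      using finS' finE S'B' by (intro card_Un_disjoint) auto
    ultimately show ?thesis by simp
  qed
  have d1: "card (E - B - F) + card (B - F) = card (E - F)"
  proof -
    have "E - F = (E - B - F) \<union> (B - F)" using BE by blast
    then show ?thesis using finE finB by (metis Diff_disjoint Int_commute Diff_Diff_Int card_Un_disjoint finite_Diff Diff_Int2 inf.idem)
  qed
  have d2: "card (E - B' - F) + card (B' - F) = card (E - F)"
  proof -
    have "E - F = (E - B' - F) \<union> (B' - F)" using BE by blast
    then show ?thesis using finE finB by (metis Diff_disjoint Int_commute Diff_Diff_Int card_Un_disjoint finite_Diff Diff_Int2 inf.idem)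
  qed
  have d3: "card (B - F) + card (B \<inter> F) = card B" using finB(1)
    by (metis add.commute card_Int_Diff)
  have d4: "card (B' - F) + card S' = card B'" using finB(2) B'F
    by (metis add.commute card_Int_Diff)
  have d5: "card (B \<inter> F) \<le> card S'"
    by (rule closure_card[OF M S'indep]) (auto intro: matroid_down[OF M iB(1)] simp: F_def)
  have "card Q \<le> card Q'" using cQ cQ' d1 d2 d3 d4 d5 cS cBB' by linarith
  then show ?thesis using VQ by blast
qed


lemma verifies_all:
  assumes MB: "is_MWB E indep w B" and EE: "E \<subseteq> E"
  shows "verifies E indep A w E B"
  unfolding verifies_def
proof (intro conjI allI impI)
  show "E \<subseteq> E" by simp
  fix w' assume "consistent E A w E w'"
  then have ww: "\<forall>e\<in>E. w' e = w e" by (simp add: consistent_def)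
  have sc: "sum w' X = sum w X" if "basis E indep X" for X
    using that ww by (intro sum.cong) (auto simp: basis_def)
  show "is_MWB E indep w' B" using MB sc unfolding is_MWB_def by metis
qed

lemma vc_le:
  assumes M: "matroid E indep" and AU: "\<forall>e\<in>E. A e = {L,U}" and LU: "L < U"
    and wA: "\<forall>e\<in>E. w e \<in> A e" and cE: "\<forall>e\<in>E. c e = k" and cnn: "\<forall>e\<in>E. c e \<ge> 0"
    and MB: "is_MWB E indep w B" and MB': "is_MWB E indep w B'"
  shows "verification_cost E indep A w c B \<le> verification_cost E indep A w c B'"
proof -
  have finE: "finite E" using M by (simp add: matroid_def)
  have fin: "finite (sum c ` {Q. verifies E indep A w Q X})" for X
  proof -
    have "{Q. verifies E indep A w Q X} \<subseteq> Pow E" by (auto simp: verifies_def)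
    then show ?thesis using finE by (meson finite_Pow_iff finite_imageI finite_subset)
  qed
  have "E \<in> {Q. verifies E indep A w Q B'}" using verifies_all[OF MB'] by simp
  then have "Min (sum c ` {Q. verifies E indep A w Q B'}) \<in> sum c ` {Q. verifies E indep A w Q B'}"
    using fin by (intro Min_in) auto
  then obtain Q' where V': "verifies E indep A w Q' B'"
    and cQ': "sum c Q' = verification_cost E indep A w c B'"
    unfolding verification_cost_def by auto
  obtain Q where V: "verifies E indep A w Q B" and cQQ': "card Q \<le> card Q'"
    using key[OF M AU LU wA MB MB' V'] by blast
  have QE: "Q \<subseteq> E" "Q' \<subseteq> E" using V V' by (auto simp: verifies_def)
  have sk: "sum c X = k * card X" if "X \<subseteq> E" for X
  proof -
    have "sum c X = sum (\<lambda>_. k) X" using that cE by (intro sum.cong) auto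
    then show ?thesis by simp
  qed
  have sQ: "sum c Q = k * card Q" "sum c Q' = k * card Q'" using sk QE by auto
  have "sum c Q \<le> sum c Q'"
  proof (cases "E = {}")
    case True then show ?thesis using QE by simp
  next
    case False
    then have "k \<ge> 0" using cE cnn by auto
    then show ?thesis using sQ cQQ' by (simp add: mult_left_mono)
  qed
  moreover have "verification_cost E indep A w c B \<le> sum c Q"
    unfolding verification_cost_def using fin V by (intro Min_le) auto
  ultimately show ?thesis using cQ' by linarith
qed

theorem corollary23:
  fixes E :: "'a set" and indep :: "'a set \<Rightarrow> bool"
    and A :: "'a \<Rightarrow> real set" and w c :: "'a \<Rightarrow> real" and D K :: "'a set"
  assumes "wu_matroid E indep A w c"
    and "\<forall>e\<in>E. A e = {lower A e, upper A e}"
    and "compatible_minor E indep A w c D K"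
    and "\<forall>e\<in>minor_ground E D K. w e \<noteq> upper A e \<and> w e \<noteq> lower A e"
  shows "is_MWB E indep w K \<and>
           (\<exists>Q. verifies E indep A w Q K \<and> sum c Q = opt_cost E indep A w c) \<and>
         ((\<exists>k. \<forall>e\<in>E. c e = k) \<longrightarrow> (\<exists>L U. L < U \<and> (\<forall>e\<in>E. A e = {L, U})) \<longrightarrow>
           (\<forall>B B'. is_MWB E indep w B \<and> is_MWB E indep w B' \<longrightarrow>
              verification_cost E indep A w c B = verification_cost E indep A w c B'))"
proof -
  have M: "matroid E indep" and wA: "\<forall>e\<in>E. w e \<in> A e" and cnn: "\<forall>e\<in>E. c e \<ge> 0"
    using assms(1) by (auto simp: wu_matroid_def)
  obtain Q B where V: "verifies E indep A w Q B" and MB: "is_MWB E indep w B"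
    and cQ: "sum c Q = opt_cost E indep A w c" and KB: "K \<subseteq> B" and DB: "D \<inter> B = {}"
    using assms(3) unfolding compatible_minor_def by blast
  have "E \<subseteq> D \<union> K"
  proof
    fix e assume e: "e \<in> E"
    show "e \<in> D \<union> K"
    proof (rule ccontr)
      assume "e \<notin> D \<union> K"
      then have "e \<in> minor_ground E D K" using e by (simp add: minor_ground_def)
      moreover have "w e \<in> {lower A e, upper A e}" using wA assms(2) e by metis
      ultimately show False using assms(4) by auto
    qed
  qed
  moreover have "B \<subseteq> E" using MB by (simp add: is_MWB_def basis_def)
  ultimately have "B = K" using KB DB by blast
  then have P12: "is_MWB E indep w K \<and>
           (\<exists>Q. verifies E indep A w Q K \<and> sum c Q = opt_cost E indep A w c)"
    using V MB cQ by blast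
  have P3: "verification_cost E indep A w c B1 = verification_cost E indep A w c B2"
    if k: "\<forall>e\<in>E. c e = k" and LU: "L < U" and AU: "\<forall>e\<in>E. A e = {L, U}"
      and M1: "is_MWB E indep w B1" and M2: "is_MWB E indep w B2" for k L U B1 B2
    using vc_le[OF M AU LU wA k cnn M1 M2] vc_le[OF M AU LU wA k cnn M2 M1] by linarith
  show ?thesis using P12 P3 by blast
qed

end
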